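(* The elements $x^{\mathbf a_1}-\lambda x^{\mathbf a_0},\dots,x^{\mathbf a_m}-\lambda x^{\mathbf a_0}$ form a regular sequence on $S'$.
   Context: Let $A=\{\mathbf a_1,\dots,\mathbf a_m\}\subseteq\mathbb Z^n$ be linearly independent over $\mathbb R$, $\mathbf a_0\in\mathbb Z^n$, and $\ell_0,\dots,\ell_m$ positive integers with gcd $1$, $\ell_0\mathbf a_0=\sum_{j=1}^m\ell_j\mathbf a_j$, $\ell_0=\sum_{j=1}^m\ell_j$. Let $V$ be the real span of $A$, $V_{\mathbb Z}=V\cap\mathbb Z^n$, $C(A)$ the real cone generated by $A$, $M=V_{\mathbb Z}\cap C(A)$, and $S'$ the $\mathbb C(\lambda)$-subalgebra of $\mathbb C(\lambda)[x_1^{\pm1},\dots,x_n^{\pm1}]$ spanned by $\{x^u:u\in M\}$, $\lambda$ an indeterminate. *)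

theory Defs
  imports "HOL-Analysis.Analysis" "HOL-Library.Poly_Mapping"
    "HOL-Computational_Algebra.Polynomial" "HOL-Computational_Algebra.Fraction_Field"
begin

text \<open>The field C(lambda) of rational functions in an indeterminate lambda.\<close>
type_synonym ratfun = "complex poly fract"

definition lam :: ratfun where "lam = Fract [:0, 1:] 1"

text \<open>Laurent polynomials in x_1..x_n over C(lambda): finitely supported
  functions Z^n -> C(lambda) with convolution product (group algebra of Z^n).\<close>
type_synonym ('n) laurent = "(int ^ 'n::finite) \<Rightarrow>\<^sub>0 ratfun"

definition monomial_x :: "int ^ 'n \<Rightarrow> 'n laurent"  ("x\<^bsup>_\<^esup>")
  where "monomial_x u = Poly_Mapping.single u 1"

definition const_l :: "ratfun \<Rightarrow> ('n::finite) laurent"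
  where "const_l c = Poly_Mapping.single 0 c"

definition rvec :: "int ^ 'n \<Rightarrow> real ^ 'n"
  where "rvec v = (\<chi> i. real_of_int (v $ i))"

definition real_cone :: "(nat \<Rightarrow> int ^ 'n) \<Rightarrow> nat \<Rightarrow> (real ^ 'n) set"
  where "real_cone a m = {\<Sum>j=1..m. c j *\<^sub>R rvec (a j) | c. \<forall>j. 0 \<le> c j}"

definition VZ :: "(nat \<Rightarrow> int ^ 'n) \<Rightarrow> nat \<Rightarrow> (int ^ 'n) set"
  where "VZ a m = {v. rvec v \<in> span (rvec ` a ` {1..m})}"

definition Mset :: "(nat \<Rightarrow> int ^ 'n) \<Rightarrow> nat \<Rightarrow> (int ^ 'n) set"
  where "Mset a m = {v. v \<in> VZ a m \<and> rvec v \<in> real_cone a m}"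

text \<open>S' = C(lambda)-span of the monomials x^u, u \<in> M, i.e. the Laurent
  polynomials supported in M.\<close>
definition Sprime :: "(nat \<Rightarrow> int ^ 'n) \<Rightarrow> nat \<Rightarrow> 'n laurent set"
  where "Sprime a m = {p. Poly_Mapping.keys p \<subseteq> Mset a m}"

definition ideal_in :: "'a::comm_ring_1 set \<Rightarrow> 'a list \<Rightarrow> 'a set"
  where "ideal_in R fs = {\<Sum>i<length fs. g i * fs ! i | g. \<forall>i. g i \<in> R}"

definition regular_seq_on :: "'a::comm_ring_1 set \<Rightarrow> 'a list \<Rightarrow> bool"
  where "regular_seq_on R fs \<longleftrightarrow>
     set fs \<subseteq> R \<and>
     (\<forall>i<length fs. \<forall>g\<in>R. g * fs ! i \<in> ideal_in R (take i fs) \<longrightarrow> g \<in> ideal_in R (take i fs)) \<and>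
     1 \<notin> ideal_in R fs"

end

theory Submission
  imports Defs
begin



definition Ov :: "ratfun set" where
  "Ov = {q. \<exists>p s. poly s 0 \<noteq> 0 \<and> q = Fract p s}"

definition Lv :: "ratfun set" where
  "Lv = {lam * q | q. q \<in> Ov}"

lemma OvI: "poly s 0 \<noteq> 0 \<Longrightarrow> Fract p s \<in> Ov"
  unfolding Ov_def by blast

lemma OvE: assumes "x \<in> Ov" obtains p s where "poly s 0 \<noteq> 0" "s \<noteq> 0" "x = Fract p s"
  using assms unfolding Ov_def by force

lemma Ov_add: assumes "x \<in> Ov" "y \<in> Ov" shows "x + y \<in> Ov"
proof -
  obtain p s where 1: "poly s 0 \<noteq> 0" "s \<noteq> 0" "x = Fract p s" using assms(1) by (rule OvE)
  obtain p2 s2 where 2: "poly s2 0 \<noteq> 0" "s2 \<noteq> 0" "y = Fract p2 s2" using assms(2) by (rule OvE)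
  have "x + y = Fract (p * s2 + p2 * s) (s * s2)" using 1 2 by simp
  moreover have "poly (s * s2) 0 \<noteq> 0" using 1 2 by simp
  ultimately show ?thesis using OvI by metis
qed

lemma Ov_mult: assumes "x \<in> Ov" "y \<in> Ov" shows "x * y \<in> Ov"
proof -
  obtain p s where 1: "poly s 0 \<noteq> 0" "s \<noteq> 0" "x = Fract p s" using assms(1) by (rule OvE)
  obtain p2 s2 where 2: "poly s2 0 \<noteq> 0" "s2 \<noteq> 0" "y = Fract p2 s2" using assms(2) by (rule OvE)
  have "x * y = Fract (p * p2) (s * s2)" using 1 2 by simp
  moreover have "poly (s * s2) 0 \<noteq> 0" using 1 2 by simp
  ultimately show ?thesis using OvI by metis
qed

lemma Ov_uminus: assumes "x \<in> Ov" shows "- x \<in> Ov"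
proof -
  obtain p s where 1: "poly s 0 \<noteq> 0" "s \<noteq> 0" "x = Fract p s" using assms(1) by (rule OvE)
  have "- x = Fract (- p) s" using 1 by simp
  then show ?thesis using OvI 1 by metis
qed

lemma Ov_poly: "Fract p 1 \<in> Ov"
  by (rule OvI) simp

lemma Ov_0: "0 \<in> Ov" and Ov_1: "1 \<in> Ov" and Ov_lam: "lam \<in> Ov"
  by (auto simp: Zero_fract_def One_fract_def lam_def intro: Ov_poly)

lemma Lv_sub: "Lv \<subseteq> Ov"
  unfolding Lv_def using Ov_mult Ov_lam by auto

lemma Lv_0: "0 \<in> Lv"
  unfolding Lv_def using Ov_0 by force

lemma Lv_add: "x \<in> Lv \<Longrightarrow> y \<in> Lv \<Longrightarrow> x + y \<in> Lv"
  unfolding Lv_def using Ov_add by (auto simp: distrib_left[symmetric])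

lemma Lv_uminus: assumes "x \<in> Lv" shows "- x \<in> Lv"
proof -
  obtain q where "q \<in> Ov" "x = lam * q" using assms unfolding Lv_def by auto
  then have "- x = lam * (- q)" "- q \<in> Ov" using Ov_uminus by auto
  then show ?thesis unfolding Lv_def by blast
qed

lemma Lv_mult: assumes "x \<in> Ov" "y \<in> Lv" shows "x * y \<in> Lv"
proof -
  obtain q where "q \<in> Ov" "y = lam * q" using assms unfolding Lv_def by auto
  then have "x * y = lam * (x * q)" "x * q \<in> Ov" using Ov_mult assms by (auto simp: ac_simps)
  then show ?thesis unfolding Lv_def by blast
qed

lemma Lv_mult2: "x \<in> Lv \<Longrightarrow> y \<in> Ov \<Longrightarrow> x * y \<in> Lv"
  using Lv_mult[of y x] by (simp add: mult.commute)

lemma lam_Lv: "lam \<in> Lv"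
  unfolding Lv_def using Ov_1 by force

lemma lam_pow: "lam ^ n = Fract ([:0,1:] ^ n) 1"
  by (induction n) (auto simp: lam_def One_fract_def)

lemma lam_nz: "lam \<noteq> 0"
  by (simp add: lam_def Zero_fract_def eq_fract)

lemma Ov_decomp:
  assumes "q \<noteq> 0"
  shows "\<exists>i j u. q * lam ^ j = lam ^ i * u \<and> u \<in> Ov \<and> u \<notin> Lv"
proof -
  obtain p s where q: "q = Fract p s" "s \<noteq> 0" "p \<noteq> 0"
    using assms by (cases q rule: Fract_cases_nonzero) auto
  obtain p' where p': "p = [:0,1:] ^ order 0 p * p'" "\<not> [:0,1:] dvd p'"
    using order_decomp[OF q(3), of 0] by auto
  obtain s' where s': "s = [:0,1:] ^ order 0 s * s'" "\<not> [:0,1:] dvd s'"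
    using order_decomp[OF q(2), of 0] by auto
  have p0: "poly p' 0 \<noteq> 0" and s0: "poly s' 0 \<noteq> 0"
    using p'(2) s'(2) by (auto simp: poly_eq_0_iff_dvd)
  define i where "i = order 0 p"
  define j where "j = order 0 s"
  have s'nz: "s' \<noteq> 0" using s0 by auto
  have "q * lam ^ j = Fract (([:0,1:] ^ i * p') * [:0,1:] ^ j) (([:0,1:] ^ j * s') * 1)"
    using q p' s' by (simp add: lam_pow i_def j_def)
  also have "\<dots> = Fract ([:0,1:] ^ j * ([:0,1:] ^ i * p')) ([:0,1:] ^ j * s')"
    by (simp add: ac_simps)
  also have "\<dots> = Fract ([:0,1:] ^ i * p') s'"
    by (rule mult_fract_cancel) simp
  also have "\<dots> = lam ^ i * Fract p' s'"
    by (simp add: lam_pow)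
  finally have 1: "q * lam ^ j = lam ^ i * Fract p' s'" .
  have 2: "Fract p' s' \<in> Ov" using s0 unfolding Ov_def by auto
  have 3: "Fract p' s' \<notin> Lv"
  proof
    assume "Fract p' s' \<in> Lv"
    then obtain p2 s2 where "poly s2 0 \<noteq> 0" "Fract p' s' = lam * Fract p2 s2"
      unfolding Lv_def Ov_def by auto
    then have "Fract p' s' = Fract ([:0,1:] * p2) s2" "s2 \<noteq> 0"
      by (auto simp: lam_def)
    then have "p' * s2 = [:0,1:] * p2 * s'"
      using s'nz by (simp add: eq_fract)
    then have "poly (p' * s2) 0 = poly ([:0,1:] * p2 * s') 0" by simp
    then show False using p0 \<open>poly s2 0 \<noteq> 0\<close> by simp
  qed
  show ?thesis using 1 2 3 by blast
qed

lemma one_notin_Lv: "1 \<notin> Lv"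
proof
  assume "1 \<in> Lv"
  then obtain p2 s2 where "poly s2 0 \<noteq> 0" "1 = lam * Fract p2 s2"
    unfolding Lv_def Ov_def by auto
  then have "Fract 1 1 = Fract ([:0,1:] * p2) s2" "s2 \<noteq> 0"
    by (auto simp: lam_def One_fract_def)
  then have "1 * s2 = [:0,1:] * p2 * 1"
    by (simp add: eq_fract)
  then have "poly s2 0 = poly ([:0,1:] * p2) 0" by simp
  then show False using \<open>poly s2 0 \<noteq> 0\<close> by simp
qed




lemma sum_closed:
  assumes "0 \<in> C" "\<And>x y. x \<in> C \<Longrightarrow> y \<in> C \<Longrightarrow> x + y \<in> C" "\<And>i. i \<in> F \<Longrightarrow> f i \<in> C"
  shows "sum f F \<in> C"
  using assms(3)
proof (induction F rule: infinite_finite_induct)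
  case (infinite A) then show ?case using assms(1) by simp
next
  case empty then show ?case using assms(1) by simp
next
  case (insert x F) then show ?case using assms(2) by simp
qed

lemma pm_expand: "(p :: ('a::comm_monoid_add \<Rightarrow>\<^sub>0 'b::comm_semiring_1)) = (\<Sum>u\<in>Poly_Mapping.keys p. Poly_Mapping.single u (Poly_Mapping.lookup p u))"
proof (rule poly_mapping_eqI)
  fix w
  show "Poly_Mapping.lookup p w = Poly_Mapping.lookup (\<Sum>u\<in>Poly_Mapping.keys p. Poly_Mapping.single u (Poly_Mapping.lookup p u)) w"
    by (simp add: lookup_sum lookup_single when_def in_keys_iff)
qed

lemma mon_mult: "x\<^bsup>u\<^esup> * x\<^bsup>v\<^esup> = x\<^bsup>u + v\<^esup>"
  by (simp add: monomial_x_def mult_single)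

lemma const_mon: "const_l c * x\<^bsup>u\<^esup> = Poly_Mapping.single u c"
  by (simp add: monomial_x_def const_l_def mult_single)

lemma const_add: "const_l (b + c) = const_l b + (const_l c :: 'n::finite laurent)"
  by (simp add: const_l_def single_add)

lemma const_mult: "const_l (b * c) = const_l b * (const_l c :: 'n::finite laurent)"
  by (simp add: const_l_def mult_single)

lemma const_one: "const_l 1 = (1 :: 'n::finite laurent)"
  by (simp add: const_l_def)

lemma mon_zero: "x\<^bsup>0\<^esup> = (1 :: 'n::finite laurent)"
  by (simp add: monomial_x_def)

lemma keys_mon: "Poly_Mapping.keys (x\<^bsup>u\<^esup> :: 'n::finite laurent) = {u}"
  by (simp add: monomial_x_def)

definition LL :: "ratfun set \<Rightarrow> ('n::finite) laurent set" where
  "LL A = {p. \<forall>w. Poly_Mapping.lookup p w \<in> A}"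

lemma LL_single: "c \<in> A \<Longrightarrow> 0 \<in> A \<Longrightarrow> Poly_Mapping.single u c \<in> LL A"
  by (simp add: LL_def lookup_single when_def)

lemma LL_add:
  assumes "\<And>x y. x \<in> A \<Longrightarrow> y \<in> A \<Longrightarrow> x + y \<in> A"
  shows "p \<in> LL A \<Longrightarrow> q \<in> LL A \<Longrightarrow> p + q \<in> LL A"
  using assms by (simp add: LL_def lookup_add)

lemma LL_mult:
  assumes C0: "0 \<in> C" and Cadd: "\<And>x y. x \<in> C \<Longrightarrow> y \<in> C \<Longrightarrow> x + y \<in> C"
    and ABC: "\<And>x y. x \<in> A \<Longrightarrow> y \<in> B \<Longrightarrow> x * y \<in> C"
    and p: "p \<in> LL A" and q: "q \<in> LL B"
  shows "p * q \<in> LL C"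
proof -
  have "p * q = (\<Sum>u\<in>Poly_Mapping.keys p. Poly_Mapping.single u (Poly_Mapping.lookup p u))
     * (\<Sum>v\<in>Poly_Mapping.keys q. Poly_Mapping.single v (Poly_Mapping.lookup q v))"
    by (subst pm_expand[of p], subst pm_expand[of q]) (rule refl)
  also have "\<dots> = (\<Sum>u\<in>Poly_Mapping.keys p. \<Sum>v\<in>Poly_Mapping.keys q.
       Poly_Mapping.single (u + v) (Poly_Mapping.lookup p u * Poly_Mapping.lookup q v))"
    by (simp add: sum_distrib_left sum_distrib_right mult_single) (rule sum.swap)
  finally have eq: "p * q = \<dots>" .
  show ?thesis unfolding LL_def
  proof (rule CollectI, rule allI)
    fix w
    have "Poly_Mapping.lookup (p * q) w = (\<Sum>u\<in>Poly_Mapping.keys p. \<Sum>v\<in>Poly_Mapping.keys q.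
       (if u + v = w then Poly_Mapping.lookup p u * Poly_Mapping.lookup q v else 0))"
      by (subst eq) (simp add: lookup_sum lookup_single when_def)
    also have "\<dots> \<in> C"
      using p q by (intro sum_closed[OF C0 Cadd]) (auto simp: LL_def C0 ABC)
    finally show "Poly_Mapping.lookup (p * q) w \<in> C" .
  qed
qed

lemma LL_sum:
  assumes "0 \<in> A" "\<And>x y. x \<in> A \<Longrightarrow> y \<in> A \<Longrightarrow> x + y \<in> A" "\<And>i. i \<in> F \<Longrightarrow> f i \<in> LL A"
  shows "sum f F \<in> LL A"
  using assms by (auto simp: LL_def lookup_sum intro!: sum_closed)

lemma LL_diff:
  assumes "\<And>x y. x \<in> A \<Longrightarrow> y \<in> A \<Longrightarrow> x + y \<in> A" "\<And>x. x \<in> A \<Longrightarrow> - x \<in> A"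
  shows "p \<in> LL A \<Longrightarrow> q \<in> LL A \<Longrightarrow> p - q \<in> LL A"
  using assms by (simp add: LL_def lookup_minus) (metis diff_conv_add_uminus)

abbreviation "LO \<equiv> LL Ov"
abbreviation "LV \<equiv> LL Lv"

lemma LO_mult: "p \<in> LO \<Longrightarrow> q \<in> LO \<Longrightarrow> p * q \<in> LO"
  by (rule LL_mult[OF Ov_0 Ov_add Ov_mult])

lemma LV_mult: "p \<in> LO \<Longrightarrow> q \<in> LV \<Longrightarrow> p * q \<in> LV"
  by (rule LL_mult[OF Lv_0 Lv_add Lv_mult])

lemma LV_mult2: "p \<in> LV \<Longrightarrow> q \<in> LO \<Longrightarrow> p * q \<in> LV"
  by (rule LL_mult[OF Lv_0 Lv_add Lv_mult2])

lemma LO_diff: "p \<in> LO \<Longrightarrow> q \<in> LO \<Longrightarrow> p - q \<in> LO"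
  by (rule LL_diff[OF Ov_add Ov_uminus])

lemma LV_diff: "p \<in> LV \<Longrightarrow> q \<in> LV \<Longrightarrow> p - q \<in> LV"
  by (rule LL_diff[OF Lv_add Lv_uminus])

lemma LV_add: "p \<in> LV \<Longrightarrow> q \<in> LV \<Longrightarrow> p + q \<in> LV"
  by (rule LL_add[OF Lv_add])

lemma LV_LO: "p \<in> LV \<Longrightarrow> p \<in> LO"
  using Lv_sub by (auto simp: LL_def)

lemma mon_LO: "x\<^bsup>u\<^esup> \<in> LO"
  unfolding monomial_x_def by (rule LL_single[OF Ov_1 Ov_0])

lemma const_LO: "c \<in> Ov \<Longrightarrow> const_l c \<in> LO"
  unfolding const_l_def by (rule LL_single[OF _ Ov_0])

definition cong_l :: "'n::finite laurent \<Rightarrow> 'n laurent \<Rightarrow> bool" where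
  "cong_l p q \<longleftrightarrow> p \<in> LO \<and> q \<in> LO \<and> p - q \<in> LV"

lemma cong_mult: "cong_l p p' \<Longrightarrow> cong_l q q' \<Longrightarrow> cong_l (p * q) (p' * q')"
proof -
  assume 1: "cong_l p p'" and 2: "cong_l q q'"
  have "p * q - p' * q' = p * (q - q') + (p - p') * q'" by (simp add: algebra_simps)
  moreover have "p * (q - q') \<in> LV" using 1 2 by (auto simp: cong_l_def intro: LV_mult)
  moreover have "(p - p') * q' \<in> LV" using 1 2 by (auto simp: cong_l_def intro: LV_mult2)
  ultimately show ?thesis using 1 2 by (auto simp: cong_l_def intro: LO_mult LV_add)
qed

lemma cong_refl: "p \<in> LO \<Longrightarrow> cong_l p p"
  by (simp add: cong_l_def LL_def Lv_0)

lemma cong_power: "cong_l p q \<Longrightarrow> cong_l (p ^ n) (q ^ n)"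
  by (induction n) (auto intro: cong_mult cong_refl simp: mon_zero[symmetric] mon_LO)

lemma cong_prod: "(\<And>i. i \<in> F \<Longrightarrow> cong_l (f i) (g i)) \<Longrightarrow> cong_l (prod f F) (prod g F)"
proof (induction F rule: infinite_finite_induct)
  case (infinite A) then show ?case by (simp add: cong_refl mon_zero[symmetric] mon_LO)
next
  case empty then show ?case by (simp add: cong_refl mon_zero[symmetric] mon_LO)
next
  case (insert x F) then show ?case by (simp add: cong_mult)
qed

lemma f_cong: "cong_l (x\<^bsup>b\<^esup> - const_l lam * x\<^bsup>c\<^esup>) (x\<^bsup>b\<^esup>)"
proof -
  have "const_l lam * x\<^bsup>c\<^esup> \<in> LV" unfolding const_mon by (rule LL_single[OF lam_Lv Lv_0])
  moreover have "x\<^bsup>b\<^esup> - const_l lam * x\<^bsup>c\<^esup> - x\<^bsup>b\<^esup> = 0 - const_l lam * x\<^bsup>c\<^esup>"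
    by simp
  moreover have "(0::'a laurent) \<in> LV" by (simp add: LL_def Lv_0)
  ultimately show ?thesis
    unfolding cong_l_def using LV_LO mon_LO LO_diff LV_diff by metis
qed




lemma rvec_add: "rvec (u + v) = rvec u + rvec v"
  by (simp add: rvec_def vec_eq_iff)
lemma rvec_diff: "rvec (u - v) = rvec u - rvec v"
  by (simp add: rvec_def vec_eq_iff)
lemma rvec_smult: "rvec (k *s u) = real_of_int k *\<^sub>R rvec u"
  by (simp add: rvec_def vec_eq_iff)
lemma rvec_zero: "rvec 0 = 0"
  by (simp add: rvec_def vec_eq_iff)
lemma rvec_sum: "rvec (sum f F) = (\<Sum>x\<in>F. rvec (f x))"
  by (induction F rule: infinite_finite_induct) (auto simp: rvec_zero rvec_add)
lemma rvec_inj: "rvec u = rvec v \<Longrightarrow> u = v"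
  by (simp add: rvec_def vec_eq_iff)

lemma finite_bounded_vec: "finite {v :: int ^ 'n::finite. \<forall>i. v $ i \<in> {-N..N}}"
proof -
  have "{v :: int ^ 'n. \<forall>i. v $ i \<in> {-N..N}} \<subseteq> vec_lambda ` (PiE UNIV (\<lambda>_. {-N..N}))"
  proof
    fix v :: "int ^ 'n" assume "v \<in> {v. \<forall>i. v $ i \<in> {-N..N}}"
    then have "(\<lambda>i. v $ i) \<in> PiE UNIV (\<lambda>_. {-N..N})" by auto
    moreover have "v = vec_lambda (\<lambda>i. v $ i)" by simp
    ultimately show "v \<in> vec_lambda ` (PiE UNIV (\<lambda>_. {-N..N}))" by blast
  qed
  moreover have "finite (PiE (UNIV :: 'n set) (\<lambda>_. {-N..N}))"
    by (rule finite_PiE) auto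
  ultimately show ?thesis using finite_subset by blast
qed

locale rsq =
  fixes a :: "nat \<Rightarrow> int ^ 'n::finite" and l :: "nat \<Rightarrow> nat" and m :: nat
  assumes indep: "independent (rvec ` a ` {1..m})"
    and inj: "inj_on (\<lambda>j. rvec (a j)) {1..m}"
    and pos: "\<forall>j\<in>{0..m}. 0 < l j"
    and rel: "of_nat (l 0) *s a 0 = (\<Sum>j=1..m. of_nat (l j) *s a j)"
    and lsum: "l 0 = (\<Sum>j=1..m. l j)"
begin

abbreviation "vs j \<equiv> rvec (a j)"

lemma coeff_unique:
  assumes "(\<Sum>j=1..m. c j *\<^sub>R vs j) = (\<Sum>j=1..m. d j *\<^sub>R vs j)" "j \<in> {1..m}"
  shows "c j = d j"
proof -
  let ?S = "vs ` {1..m}"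
  define u where "u v = (c (inv_into {1..m} vs v) - d (inv_into {1..m} vs v))" for v
  have "(\<Sum>v\<in>?S. u v *\<^sub>R v) = (\<Sum>j=1..m. u (vs j) *\<^sub>R vs j)"
    using inj by (subst sum.reindex) auto
  also have "\<dots> = (\<Sum>j=1..m. (c j - d j) *\<^sub>R vs j)"
  proof (intro sum.cong refl)
    fix j assume "j \<in> {1..m}"
    then show "u (vs j) *\<^sub>R vs j = (c j - d j) *\<^sub>R vs j"
      using inv_into_f_f[OF inj, of j] by (simp add: u_def)
  qed
  also have "\<dots> = 0" using assms(1) by (simp add: scaleR_diff_left sum_subtractf)
  finally have "(\<Sum>v\<in>?S. u v *\<^sub>R v) = 0" .
  moreover have fin: "finite ?S" by auto
  moreover have nd: "\<not> dependent ?S" using indep by (simp add: image_image)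
  ultimately have "\<forall>v\<in>?S. u v = 0"
    using dependent_finite[OF fin] by blast
  then have "u (vs j) = 0" using assms(2) by blast
  then show ?thesis using inv_into_f_f[OF inj assms(2)] by (simp add: u_def)
qed

definition coord :: "int ^ 'n \<Rightarrow> nat \<Rightarrow> real" where
  "coord u = (SOME c. rvec u = (\<Sum>j=1..m. c j *\<^sub>R vs j))"

lemma VZ_iff: "u \<in> VZ a m \<longleftrightarrow> (\<exists>c. rvec u = (\<Sum>j=1..m. c j *\<^sub>R vs j))"
proof
  assume "u \<in> VZ a m"
  then have "rvec u \<in> span (vs ` {1..m})" by (simp add: VZ_def image_image)
  then obtain w where "rvec u = (\<Sum>v\<in>vs ` {1..m}. w v *\<^sub>R v)"
    using span_finite[of "vs ` {1..m}"] by auto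
  also have "\<dots> = (\<Sum>j=1..m. w (vs j) *\<^sub>R vs j)"
    using inj by (subst sum.reindex) auto
  finally show "\<exists>c. rvec u = (\<Sum>j=1..m. c j *\<^sub>R vs j)" by (rule exI[of _ "\<lambda>j. w (vs j)"])
next
  assume "\<exists>c. rvec u = (\<Sum>j=1..m. c j *\<^sub>R vs j)"
  then obtain c where "rvec u = (\<Sum>j=1..m. c j *\<^sub>R vs j)" by blast
  moreover have "(\<Sum>j=1..m. c j *\<^sub>R vs j) \<in> span (vs ` {1..m})"
    by (intro span_sum span_scale span_base) auto
  ultimately show "u \<in> VZ a m" by (simp add: VZ_def image_image)
qed

lemma coord_VZ: assumes "u \<in> VZ a m" shows "rvec u = (\<Sum>j=1..m. coord u j *\<^sub>R vs j)"
proof -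
  obtain c where "rvec u = (\<Sum>j=1..m. c j *\<^sub>R vs j)" using assms VZ_iff by blast
  then show ?thesis unfolding coord_def by (rule someI[where P = "\<lambda>c. rvec u = (\<Sum>j=1..m. c j *\<^sub>R vs j)"])
qed

lemma coordI:
  assumes "rvec u = (\<Sum>j=1..m. c j *\<^sub>R vs j)"
  shows "u \<in> VZ a m" "\<And>j. j \<in> {1..m} \<Longrightarrow> coord u j = c j"
proof -
  show 1: "u \<in> VZ a m" using assms VZ_iff by blast
  fix j assume j: "j \<in> {1..m}"
  have "(\<Sum>j=1..m. coord u j *\<^sub>R vs j) = (\<Sum>j=1..m. c j *\<^sub>R vs j)"
    using coord_VZ[OF 1] assms by simp
  then show "coord u j = c j" using j by (rule coeff_unique)
qed

lemma coord_sum: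
  assumes "finite F" "\<And>k. k \<in> F \<Longrightarrow> u k \<in> VZ a m"
  shows "sum u F \<in> VZ a m" "\<And>j. j \<in> {1..m} \<Longrightarrow> coord (sum u F) j = (\<Sum>k\<in>F. coord (u k) j)"
proof -
  have "rvec (sum u F) = (\<Sum>k\<in>F. \<Sum>j=1..m. coord (u k) j *\<^sub>R vs j)"
    using assms coord_VZ by (simp add: rvec_sum)
  also have "\<dots> = (\<Sum>j=1..m. (\<Sum>k\<in>F. coord (u k) j) *\<^sub>R vs j)"
    by (subst sum.swap) (simp add: scaleR_sum_left)
  finally have e: "rvec (sum u F) = \<dots>" .
  show "sum u F \<in> VZ a m" by (rule coordI(1)[OF e])
  fix j assume "j \<in> {1..m}"
  then show "coord (sum u F) j = (\<Sum>k\<in>F. coord (u k) j)" by (rule coordI(2)[OF e])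
qed

lemma coord_add:
  assumes "u \<in> VZ a m" "v \<in> VZ a m"
  shows "u + v \<in> VZ a m" "\<And>j. j \<in> {1..m} \<Longrightarrow> coord (u + v) j = coord u j + coord v j"
proof -
  have e: "rvec (u + v) = (\<Sum>j=1..m. (coord u j + coord v j) *\<^sub>R vs j)"
    using assms coord_VZ by (simp add: rvec_add scaleR_add_left sum.distrib)
  show "u + v \<in> VZ a m" by (rule coordI(1)[OF e])
  fix j assume "j \<in> {1..m}" then show "coord (u + v) j = coord u j + coord v j" by (rule coordI(2)[OF e])
qed

lemma coord_diff:
  assumes "u \<in> VZ a m" "v \<in> VZ a m"
  shows "u - v \<in> VZ a m" "\<And>j. j \<in> {1..m} \<Longrightarrow> coord (u - v) j = coord u j - coord v j"
proof -
  have e: "rvec (u - v) = (\<Sum>j=1..m. (coord u j - coord v j) *\<^sub>R vs j)"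
    using assms coord_VZ by (simp add: rvec_diff scaleR_diff_left sum_subtractf)
  show "u - v \<in> VZ a m" by (rule coordI(1)[OF e])
  fix j assume "j \<in> {1..m}" then show "coord (u - v) j = coord u j - coord v j" by (rule coordI(2)[OF e])
qed

lemma coord_smult:
  assumes "u \<in> VZ a m"
  shows "k *s u \<in> VZ a m" "\<And>j. j \<in> {1..m} \<Longrightarrow> coord (k *s u) j = real_of_int k * coord u j"
proof -
  have e: "rvec (k *s u) = (\<Sum>j=1..m. (real_of_int k * coord u j) *\<^sub>R vs j)"
    using assms coord_VZ by (simp add: rvec_smult scaleR_sum_right)
  show "k *s u \<in> VZ a m" by (rule coordI(1)[OF e])
  fix j assume "j \<in> {1..m}" then show "coord (k *s u) j = real_of_int k * coord u j" by (rule coordI(2)[OF e])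
qed

lemma coord_zero: "0 \<in> VZ a m" "\<And>j. j \<in> {1..m} \<Longrightarrow> coord 0 j = 0"
proof -
  have e: "rvec 0 = (\<Sum>j=1..m. 0 *\<^sub>R vs j)" by (simp add: rvec_zero)
  show "0 \<in> VZ a m" by (rule coordI(1)[OF e])
  fix j assume "j \<in> {1..m}" then show "coord 0 j = 0" using coordI(2)[OF e] by simp
qed

lemma coord_a:
  assumes "i \<in> {1..m}"
  shows "a i \<in> VZ a m" "\<And>j. j \<in> {1..m} \<Longrightarrow> coord (a i) j = (if j = i then 1 else 0)"
proof -
  have e: "rvec (a i) = (\<Sum>j=1..m. (if j = i then 1 else 0) *\<^sub>R vs j)"
    using assms by (subst sum.cong[OF refl, of _ _ "\<lambda>j. if j = i then vs j else 0"]) auto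
  show "a i \<in> VZ a m" by (rule coordI(1)[OF e])
  fix j assume "j \<in> {1..m}" then show "coord (a i) j = (if j = i then 1 else 0)" by (rule coordI(2)[OF e])
qed

lemma l0_pos: "0 < l 0" using pos by auto

lemma coord_a0: "a 0 \<in> VZ a m" "\<And>j. j \<in> {1..m} \<Longrightarrow> coord (a 0) j = real (l j) / real (l 0)"
proof -
  have "real (l 0) *\<^sub>R rvec (a 0) = rvec (of_nat (l 0) *s a 0)"
    by (simp add: rvec_smult)
  also have "\<dots> = rvec (\<Sum>j=1..m. of_nat (l j) *s a j)"
    by (simp only: rel)
  also have "\<dots> = (\<Sum>j=1..m. real (l j) *\<^sub>R vs j)"
    by (simp add: rvec_sum rvec_smult)
  finally have h: "real (l 0) *\<^sub>R rvec (a 0) = (\<Sum>j=1..m. real (l j) *\<^sub>R vs j)" .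
  have "rvec (a 0) = (1 / real (l 0)) *\<^sub>R (real (l 0) *\<^sub>R rvec (a 0))"
    using l0_pos by simp
  also have "\<dots> = (1 / real (l 0)) *\<^sub>R (\<Sum>j=1..m. real (l j) *\<^sub>R vs j)"
    by (simp only: h)
  also have "\<dots> = (\<Sum>j=1..m. (real (l j) / real (l 0)) *\<^sub>R vs j)"
    by (simp add: scaleR_sum_right)
  finally have e: "rvec (a 0) = (\<Sum>j=1..m. (real (l j) / real (l 0)) *\<^sub>R vs j)" .
  show "a 0 \<in> VZ a m" by (rule coordI(1)[OF e])
  fix j assume "j \<in> {1..m}" then show "coord (a 0) j = real (l j) / real (l 0)" by (rule coordI(2)[OF e])
qed

abbreviation "MM \<equiv> Mset a m"

lemma M_iff: "u \<in> MM \<longleftrightarrow> u \<in> VZ a m \<and> (\<forall>j\<in>{1..m}. 0 \<le> coord u j)"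
proof
  assume "u \<in> MM"
  then have u: "u \<in> VZ a m" and "rvec u \<in> real_cone a m" unfolding Mset_def by simp_all
  then obtain c where c: "rvec u = (\<Sum>j=1..m. c j *\<^sub>R vs j)" "\<forall>j. 0 \<le> c j"
    unfolding real_cone_def by blast
  have "\<forall>j\<in>{1..m}. 0 \<le> coord u j"
  proof
    fix j assume "j \<in> {1..m}"
    then have "coord u j = c j" by (rule coordI(2)[OF c(1)])
    then show "0 \<le> coord u j" using c(2) by simp
  qed
  then show "u \<in> VZ a m \<and> (\<forall>j\<in>{1..m}. 0 \<le> coord u j)"
    using u by blast
next
  assume as: "u \<in> VZ a m \<and> (\<forall>j\<in>{1..m}. 0 \<le> coord u j)"
  define c where "c j = (if j \<in> {1..m} then coord u j else 0)" for j
  have "rvec u = (\<Sum>j=1..m. coord u j *\<^sub>R vs j)"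
    using coord_VZ as by blast
  also have "\<dots> = (\<Sum>j=1..m. c j *\<^sub>R vs j)"
    by (rule sum.cong[OF refl]) (simp add: c_def)
  finally have "rvec u = (\<Sum>j=1..m. c j *\<^sub>R vs j)" .
  moreover have "\<forall>j. 0 \<le> c j" using as by (auto simp: c_def)
  ultimately have "rvec u \<in> real_cone a m" unfolding real_cone_def by blast
  then show "u \<in> MM" using as unfolding Mset_def by simp
qed

definition deg :: "int ^ 'n \<Rightarrow> real" where
  "deg u = (\<Sum>j=1..m. coord u j)"

lemma M_add: assumes "u \<in> MM" "v \<in> MM" shows "u + v \<in> MM" "deg (u + v) = deg u + deg v"
proof -
  have u: "u \<in> VZ a m" "\<And>j. j \<in> {1..m} \<Longrightarrow> 0 \<le> coord u j" using assms(1) M_iff by auto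
  have v: "v \<in> VZ a m" "\<And>j. j \<in> {1..m} \<Longrightarrow> 0 \<le> coord v j" using assms(2) M_iff by auto
  have c: "\<And>j. j \<in> {1..m} \<Longrightarrow> coord (u + v) j = coord u j + coord v j"
    using coord_add(2)[OF u(1) v(1)] by blast
  show "u + v \<in> MM" unfolding M_iff
    using coord_add(1)[OF u(1) v(1)] c u(2) v(2) by simp
  have "deg (u + v) = (\<Sum>j=1..m. coord u j + coord v j)"
    unfolding deg_def by (rule sum.cong[OF refl]) (rule c)
  then show "deg (u + v) = deg u + deg v" by (simp add: deg_def sum.distrib)
qed

lemma M_zero: "0 \<in> MM" "deg 0 = 0"
  using coord_zero by (auto simp: M_iff deg_def)

lemma M_a: assumes "i \<in> {1..m}" shows "a i \<in> MM" "deg (a i) = 1"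
proof -
  show "a i \<in> MM" unfolding M_iff using coord_a[OF assms] by simp
  have "deg (a i) = (\<Sum>j=1..m. if j = i then 1 else 0)"
    unfolding deg_def by (rule sum.cong[OF refl]) (rule coord_a(2)[OF assms])
  then show "deg (a i) = 1" using assms by simp
qed

lemma M_a0: "a 0 \<in> MM" "deg (a 0) = 1"
proof -
  show "a 0 \<in> MM" using coord_a0 by (auto simp: M_iff)
  have "deg (a 0) = (\<Sum>j=1..m. real (l j) / real (l 0))"
    unfolding deg_def by (rule sum.cong[OF refl]) (rule coord_a0(2))
  also have "\<dots> = real (\<Sum>j=1..m. l j) / real (l 0)" by (simp add: sum_divide_distrib)
  also have "\<dots> = real (l 0) / real (l 0)" by (simp only: lsum[symmetric])
  also have "\<dots> = 1" using l0_pos by simp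
  finally show "deg (a 0) = 1" .
qed

lemma finite_Md: "finite {u \<in> MM. deg u = d}"
proof -
  define B where "B = (\<Sum>j=1..m. \<Sum>i\<in>UNIV. \<bar>real_of_int (a j $ i)\<bar>)"
  have "{u \<in> MM. deg u = d} \<subseteq> {v. \<forall>i. v $ i \<in> {-ceiling (d * B)..ceiling (d*B)}}"
  proof
    fix u assume "u \<in> {u \<in> MM. deg u = d}"
    then have u: "u \<in> MM" "d = deg u" by auto
    show "u \<in> {v. \<forall>i. v $ i \<in> {-ceiling (d * B)..ceiling (d*B)}}"
    proof (rule CollectI, rule allI)
    fix i
    have c0: "\<And>j. j \<in> {1..m} \<Longrightarrow> 0 \<le> coord u j" using u M_iff by auto
    have uV: "u \<in> VZ a m" using u M_iff by auto
    have "rvec u $ i = (\<Sum>j=1..m. coord u j * real_of_int (a j $ i))"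
      using coord_VZ[OF uV] by (simp add: rvec_def sum_component)
    then have "\<bar>rvec u $ i\<bar> \<le> (\<Sum>j=1..m. \<bar>coord u j * real_of_int (a j $ i)\<bar>)"
      using sum_abs by metis
    also have "\<dots> \<le> (\<Sum>j=1..m. coord u j * B)"
    proof (rule sum_mono)
      fix j assume j: "j \<in> {1..m}"
      have "\<bar>real_of_int (a j $ i)\<bar> \<le> (\<Sum>i\<in>UNIV. \<bar>real_of_int (a j $ i)\<bar>)"
        by (rule member_le_sum) auto
      also have "\<dots> \<le> B" unfolding B_def
        by (rule member_le_sum[where f="\<lambda>j. (\<Sum>i\<in>UNIV. \<bar>real_of_int (a j $ i)\<bar>)" and i=j]) (use j in \<open>auto intro: sum_nonneg\<close>)
      finally show "\<bar>coord u j * real_of_int (a j $ i)\<bar> \<le> coord u j * B"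
        using c0[OF j] by (simp add: abs_mult mult_left_mono)
    qed
    also have "\<dots> = d * B" using u by (simp add: deg_def sum_distrib_right)
    finally have h: "\<bar>real_of_int (u $ i)\<bar> \<le> d * B" by (simp add: rvec_def)
    have "real_of_int (u $ i) \<le> real_of_int (ceiling (d * B))"
      using h le_of_int_ceiling[of "d * B"] by linarith
    moreover have "- real_of_int (ceiling (d * B)) \<le> real_of_int (u $ i)"
      using h le_of_int_ceiling[of "d * B"] by linarith
    ultimately show "u $ i \<in> {-ceiling (d * B)..ceiling (d*B)}"
      by simp
  qed
  qed
  then show ?thesis using finite_bounded_vec finite_subset by blast
qed

end



context rsq begin

lemma coord_lincomb:
  "(\<Sum>j=1..m. int (\<beta> j) *s a j) \<in> VZ a m"
  "\<And>j. j \<in> {1..m} \<Longrightarrow> coord (\<Sum>j=1..m. int (\<beta> j) *s a j) j = real (\<beta> j)"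
proof -
  have V: "\<And>k. k \<in> {1..m} \<Longrightarrow> int (\<beta> k) *s a k \<in> VZ a m"
    using coord_a(1) coord_smult(1) by blast
  show "(\<Sum>j=1..m. int (\<beta> j) *s a j) \<in> VZ a m"
    using coord_sum(1)[of "{1..m}" "\<lambda>k. int (\<beta> k) *s a k"] V by simp
  fix j assume j: "j \<in> {1..m}"
  have "coord (\<Sum>j=1..m. int (\<beta> j) *s a j) j = (\<Sum>k=1..m. coord (int (\<beta> k) *s a k) j)"
    using coord_sum(2)[of "{1..m}" "\<lambda>k. int (\<beta> k) *s a k"] V j by simp
  also have "\<dots> = (\<Sum>k=1..m. if j = k then real (\<beta> k) else 0)"
  proof (rule sum.cong[OF refl])
    fix k assume k: "k \<in> {1..m}"
    show "coord (int (\<beta> k) *s a k) j = (if j = k then real (\<beta> k) else 0)"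
      using coord_smult(2)[OF coord_a(1)[OF k] j] coord_a(2)[OF k j] by simp
  qed
  also have "\<dots> = real (\<beta> j)" using j by simp
  finally show "coord (\<Sum>j=1..m. int (\<beta> j) *s a j) j = real (\<beta> j)" .
qed

definition Pset :: "(int ^ 'n) set" where
  "Pset = {r \<in> VZ a m. \<forall>j\<in>{1..m}. 0 \<le> coord r j \<and> coord r j < 1}"

definition Qset :: "((int ^ 'n) \<times> (nat \<Rightarrow> nat)) set" where
  "Qset = {(r, \<alpha>). r \<in> Pset \<and> (\<forall>j. j \<notin> {1..m} \<longrightarrow> \<alpha> j = 0)}"

definition comp :: "(int ^ 'n) \<times> (nat \<Rightarrow> nat) \<Rightarrow> int ^ 'n" where
  "comp q = fst q + (\<Sum>j=1..m. int (snd q j) *s a j)"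

lemma comp_coord:
  assumes "q \<in> Qset"
  shows "comp q \<in> VZ a m" "\<And>j. j \<in> {1..m} \<Longrightarrow> coord (comp q) j = coord (fst q) j + real (snd q j)"
proof -
  have r: "fst q \<in> VZ a m" using assms by (auto simp: Qset_def Pset_def)
  show "comp q \<in> VZ a m" unfolding comp_def by (rule coord_add(1)[OF r coord_lincomb(1)])
  fix j assume j: "j \<in> {1..m}"
  show "coord (comp q) j = coord (fst q) j + real (snd q j)"
    unfolding comp_def using coord_add(2)[OF r coord_lincomb(1) j] coord_lincomb(2)[OF j] by simp
qed

lemma comp_M: "q \<in> Qset \<Longrightarrow> comp q \<in> MM"
  unfolding M_iff using comp_coord[of q] by (auto simp: Qset_def Pset_def)

lemma deg_comp: "q \<in> Qset \<Longrightarrow> deg (comp q) = deg (fst q) + real (\<Sum>j=1..m. snd q j)"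
proof -
  assume q: "q \<in> Qset"
  have "deg (comp q) = (\<Sum>j=1..m. coord (fst q) j + real (snd q j))"
    unfolding deg_def by (rule sum.cong[OF refl]) (rule comp_coord(2)[OF q])
  then show ?thesis by (simp add: deg_def sum.distrib)
qed

lemma comp_inj: "inj_on comp Qset"
proof (rule inj_onI)
  fix q q' assume q: "q \<in> Qset" and q': "q' \<in> Qset" and e: "comp q = comp q'"
  obtain r \<alpha> where qq: "q = (r, \<alpha>)" by (cases q)
  obtain r' \<alpha>' where qq': "q' = (r', \<alpha>')" by (cases q')
  have eqj: "\<alpha> j = \<alpha>' j" if j: "j \<in> {1..m}" for j
  proof -
    have "coord r j + real (\<alpha> j) = coord r' j + real (\<alpha>' j)"
      using comp_coord(2)[OF q j] comp_coord(2)[OF q' j] e qq qq' by simp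
    moreover have "0 \<le> coord r j" "coord r j < 1" "0 \<le> coord r' j" "coord r' j < 1"
      using q q' j qq qq' by (auto simp: Qset_def Pset_def)
    ultimately have "real (\<alpha> j) < real (\<alpha>' j) + 1" "real (\<alpha>' j) < real (\<alpha> j) + 1" by linarith+
    then have "\<alpha> j < \<alpha>' j + 1" "\<alpha>' j < \<alpha> j + 1" by (metis of_nat_1 of_nat_add of_nat_less_iff)+
    then show ?thesis by arith
  qed
  have "\<alpha> = \<alpha>'"
  proof
    fix j show "\<alpha> j = \<alpha>' j"
      using eqj q q' qq qq' by (cases "j \<in> {1..m}") (auto simp: Qset_def)
  qed
  moreover have "r = r'"
    using e qq qq' \<open>\<alpha> = \<alpha>'\<close> by (simp add: comp_def)
  ultimately show "q = q'" using qq qq' by simp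
qed

definition dec :: "int ^ 'n \<Rightarrow> (int ^ 'n) \<times> (nat \<Rightarrow> nat)" where
  "dec u = (u - (\<Sum>j=1..m. int (nat \<lfloor>coord u j\<rfloor>) *s a j),
            \<lambda>j. if j \<in> {1..m} then nat \<lfloor>coord u j\<rfloor> else 0)"

lemma dec:
  assumes u: "u \<in> MM"
  shows "dec u \<in> Qset" "comp (dec u) = u"
proof -
  have uV: "u \<in> VZ a m" and c0: "\<And>j. j \<in> {1..m} \<Longrightarrow> 0 \<le> coord u j" using u M_iff by auto
  define \<beta> where "\<beta> j = nat \<lfloor>coord u j\<rfloor>" for j
  have S: "(\<Sum>j=1..m. int (\<beta> j) *s a j) \<in> VZ a m" by (rule coord_lincomb(1))
  have r: "u - (\<Sum>j=1..m. int (\<beta> j) *s a j) \<in> VZ a m" by (rule coord_diff(1)[OF uV S])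
  have "\<forall>j\<in>{1..m}. 0 \<le> coord (u - (\<Sum>j=1..m. int (\<beta> j) *s a j)) j \<and>
     coord (u - (\<Sum>j=1..m. int (\<beta> j) *s a j)) j < 1"
  proof
    fix j assume j: "j \<in> {1..m}"
    have "coord (u - (\<Sum>j=1..m. int (\<beta> j) *s a j)) j = coord u j - real (\<beta> j)"
      using coord_diff(2)[OF uV S j] coord_lincomb(2)[OF j] by simp
    also have "\<dots> = frac (coord u j)"
      using c0[OF j] by (simp add: \<beta>_def frac_def)
    finally show "0 \<le> coord (u - (\<Sum>j=1..m. int (\<beta> j) *s a j)) j \<and>
     coord (u - (\<Sum>j=1..m. int (\<beta> j) *s a j)) j < 1"
      using frac_lt_1 frac_ge_0 by simp
  qed
  then show "dec u \<in> Qset"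
    using r by (simp add: dec_def Qset_def Pset_def \<beta>_def)
  have "(\<Sum>j=1..m. int (if j \<in> {1..m} then \<beta> j else 0) *s a j) = (\<Sum>j=1..m. int (\<beta> j) *s a j)"
    by (rule sum.cong) auto
  then show "comp (dec u) = u"
    by (simp add: dec_def comp_def \<beta>_def)
qed

lemma comp_image: "comp ` {q \<in> Qset. deg (comp q) = d} = {u \<in> MM. deg u = d}"
proof
  show "comp ` {q \<in> Qset. deg (comp q) = d} \<subseteq> {u \<in> MM. deg u = d}"
  proof
    fix u assume "u \<in> comp ` {q \<in> Qset. deg (comp q) = d}"
    then obtain q where "q \<in> Qset" "deg (comp q) = d" "u = comp q" by blast
    then show "u \<in> {u \<in> MM. deg u = d}" using comp_M by blast
  qed
  show "{u \<in> MM. deg u = d} \<subseteq> comp ` {q \<in> Qset. deg (comp q) = d}"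
  proof
    fix u assume "u \<in> {u \<in> MM. deg u = d}"
    then have u: "u \<in> MM" "deg u = d" by auto
    then have "dec u \<in> {q \<in> Qset. deg (comp q) = d}" using dec[OF u(1)] by simp
    moreover have "u = comp (dec u)" using dec(2)[OF u(1)] by simp
    ultimately show "u \<in> comp ` {q \<in> Qset. deg (comp q) = d}" by (rule rev_image_eqI)
  qed
qed

lemma Qd_props: "finite {q \<in> Qset. deg (comp q) = d} \<and> card {q \<in> Qset. deg (comp q) = d} = card {u \<in> MM. deg u = d}"
proof -
  have inj: "inj_on comp {q \<in> Qset. deg (comp q) = d}"
    by (rule inj_on_subset[OF comp_inj]) blast
  have "finite (comp ` {q \<in> Qset. deg (comp q) = d})"
    unfolding comp_image by (rule finite_Md)
  then have "finite {q \<in> Qset. deg (comp q) = d}" using inj by (rule finite_imageD)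
  moreover have "card {q \<in> Qset. deg (comp q) = d} = card {u \<in> MM. deg u = d}"
    using card_image[OF inj] unfolding comp_image by simp
  ultimately show ?thesis by blast
qed

end



lemma keys_diff_sub: "Poly_Mapping.keys (p - q) \<subseteq> Poly_Mapping.keys p \<union> Poly_Mapping.keys (q :: 'a \<Rightarrow>\<^sub>0 'b::ab_group_add)"
proof
  fix w assume "w \<in> Poly_Mapping.keys (p - q)"
  then have "Poly_Mapping.lookup p w - Poly_Mapping.lookup q w \<noteq> 0" by (simp add: in_keys_iff lookup_minus)
  then show "w \<in> Poly_Mapping.keys p \<union> Poly_Mapping.keys q" by (auto simp: in_keys_iff)
qed

lemma keys_const_mult: "Poly_Mapping.keys (const_l c * p) \<subseteq> Poly_Mapping.keys (p :: 'n::finite laurent)"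
proof -
  have "Poly_Mapping.keys (const_l c * p) \<subseteq> {u + v |u v. u \<in> Poly_Mapping.keys (const_l c :: 'n laurent) \<and> v \<in> Poly_Mapping.keys p}"
    by (rule keys_mult)
  also have "\<dots> \<subseteq> Poly_Mapping.keys p"
    by (auto simp: const_l_def split: if_splits)
  finally show ?thesis .
qed

lemma mon_pow: "(x\<^bsup>u\<^esup>) ^ n = (x\<^bsup>int n *s u\<^esup> :: 'n::finite laurent)"
proof (induction n)
  case 0 then show ?case by (simp add: mon_zero[symmetric])
next
  case (Suc n)
  have "int (Suc n) *s u = u + int n *s u" by (simp add: vec_eq_iff algebra_simps)
  then show ?case using Suc by (simp add: mon_mult)
qed

lemma mon_prod: "finite F \<Longrightarrow> (\<Prod>j\<in>F. x\<^bsup>g j\<^esup>) = (x\<^bsup>\<Sum>j\<in>F. g j\<^esup> :: 'n::finite laurent)"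
proof (induction F rule: finite_induct)
  case empty then show ?case by (simp add: mon_zero)
next
  case (insert x F) then show ?case by (simp add: mon_mult)
qed

context rsq begin

definition Ff :: "nat \<Rightarrow> 'n laurent" where
  "Ff j = x\<^bsup>a j\<^esup> - const_l lam * x\<^bsup>a 0\<^esup>"

definition bw :: "(int ^ 'n) \<times> (nat \<Rightarrow> nat) \<Rightarrow> 'n laurent" where
  "bw q = x\<^bsup>fst q\<^esup> * (\<Prod>j=1..m. Ff j ^ snd q j)"

definition Hd :: "real \<Rightarrow> 'n laurent set" where
  "Hd d = {p. Poly_Mapping.keys p \<subseteq> {u \<in> MM. deg u = d}}"

lemma Hd_mult: assumes "p \<in> Hd d" "q \<in> Hd e" shows "p * q \<in> Hd (d + e)"
proof -
  have "Poly_Mapping.keys (p * q) \<subseteq> {u + v |u v. u \<in> Poly_Mapping.keys p \<and> v \<in> Poly_Mapping.keys q}"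
    by (rule keys_mult)
  also have "\<dots> \<subseteq> {u \<in> MM. deg u = d + e}"
  proof
    fix w assume "w \<in> {u + v |u v. u \<in> Poly_Mapping.keys p \<and> v \<in> Poly_Mapping.keys q}"
    then obtain u v where "w = u + v" "u \<in> Poly_Mapping.keys p" "v \<in> Poly_Mapping.keys q" by blast
    then have "w = u + v" "u \<in> MM" "deg u = d" "v \<in> MM" "deg v = e" using assms unfolding Hd_def by blast+
    then show "w \<in> {u \<in> MM. deg u = d + e}" using M_add by simp
  qed
  finally show ?thesis unfolding Hd_def by blast
qed

lemma mon_Hd: "u \<in> MM \<Longrightarrow> x\<^bsup>u\<^esup> \<in> Hd (deg u)"
  unfolding Hd_def by (simp add: keys_mon)

lemma one_Hd: "1 \<in> Hd 0"
  using mon_Hd[OF M_zero(1)] M_zero(2) by (simp add: mon_zero)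

lemma Ff_Hd: assumes "j \<in> {1..m}" shows "Ff j \<in> Hd 1"
proof -
  have "Poly_Mapping.keys (Ff j) \<subseteq> Poly_Mapping.keys (x\<^bsup>a j\<^esup> :: 'n laurent) \<union> Poly_Mapping.keys (const_l lam * x\<^bsup>a 0\<^esup> :: 'n laurent)"
    unfolding Ff_def by (rule keys_diff_sub)
  also have "\<dots> \<subseteq> {a j, a 0}"
    using keys_const_mult[of lam "x\<^bsup>a 0\<^esup>"] by (auto simp: keys_mon)
  also have "\<dots> \<subseteq> {u \<in> MM. deg u = 1}"
    using M_a[OF assms] M_a0 by blast
  finally show ?thesis unfolding Hd_def by blast
qed

lemma pow_Hd: "p \<in> Hd d \<Longrightarrow> p ^ n \<in> Hd (real n * d)"
proof (induction n)
  case 0 then show ?case using one_Hd by simp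
next
  case (Suc n)
  then have "p * p ^ n \<in> Hd (d + real n * d)" by (intro Hd_mult)
  then show ?case by (simp add: algebra_simps)
qed

lemma prod_Hd: "finite F \<Longrightarrow> (\<And>j. j \<in> F \<Longrightarrow> g j \<in> Hd (e j)) \<Longrightarrow> prod g F \<in> Hd (\<Sum>j\<in>F. e j)"
proof (induction F rule: finite_induct)
  case empty then show ?case using one_Hd by simp
next
  case (insert x F)
  then have "g x * prod g F \<in> Hd (e x + (\<Sum>j\<in>F. e j))" by (intro Hd_mult) auto
  then show ?case using insert by simp
qed

lemma bw_Hd: assumes q: "q \<in> Qset" shows "bw q \<in> Hd (deg (comp q))"
proof -
  have r: "fst q \<in> MM"
  proof -
    have "fst q \<in> Pset" using q unfolding Qset_def by (cases q) simp
    then show ?thesis unfolding Pset_def M_iff by simp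
  qed
  have "(\<Prod>j=1..m. Ff j ^ snd q j) \<in> Hd (\<Sum>j=1..m. real (snd q j) * 1)"
  proof (rule prod_Hd)
    fix j assume "j \<in> {1..m}"
    then show "Ff j ^ snd q j \<in> Hd (real (snd q j) * 1)" by (intro pow_Hd Ff_Hd)
  qed simp
  then have "bw q \<in> Hd (deg (fst q) + (\<Sum>j=1..m. real (snd q j) * 1))"
    unfolding bw_def by (rule Hd_mult[OF mon_Hd[OF r]])
  then show ?thesis using deg_comp[OF q] by simp
qed

lemma bw_cong: assumes q: "q \<in> Qset" shows "cong_l (bw q) (x\<^bsup>comp q\<^esup>)"
proof -
  have "cong_l (bw q) (x\<^bsup>fst q\<^esup> * (\<Prod>j=1..m. (x\<^bsup>a j\<^esup>) ^ snd q j))"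
    unfolding bw_def
    by (intro cong_mult cong_refl mon_LO cong_prod cong_power) (simp add: Ff_def f_cong)
  also have "(x\<^bsup>fst q\<^esup> * (\<Prod>j=1..m. (x\<^bsup>a j\<^esup>) ^ snd q j)) = x\<^bsup>comp q\<^esup>"
    by (simp add: mon_pow mon_prod mon_mult comp_def)
  finally show ?thesis .
qed

lemma bw_LO: "bw q \<in> LO"
  unfolding bw_def
proof (intro LO_mult mon_LO)
  have "\<And>j. Ff j \<in> LO" using f_cong unfolding Ff_def cong_l_def by blast
  then have "\<And>j n. Ff j ^ n \<in> LO"
    using cong_power[OF cong_refl] unfolding cong_l_def by blast
  then show "(\<Prod>j=1..m. Ff j ^ snd q j) \<in> LO"
    using cong_prod[OF cong_refl, of "{1..m}" "\<lambda>j. Ff j ^ snd q j"] unfolding cong_l_def by blast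
qed

end



lemma LO_sum: "(\<And>i. i \<in> F \<Longrightarrow> f i \<in> LO) \<Longrightarrow> sum f F \<in> LO"
  by (rule LL_sum[OF Ov_0 Ov_add])

lemma LV_sum: "(\<And>i. i \<in> F \<Longrightarrow> f i \<in> LV) \<Longrightarrow> sum f F \<in> LV"
  by (rule LL_sum[OF Lv_0 Lv_add])

lemma cong_sum: "(\<And>i. i \<in> F \<Longrightarrow> cong_l (f i) (g i)) \<Longrightarrow> cong_l (sum f F) (sum g F)"
proof -
  assume h: "\<And>i. i \<in> F \<Longrightarrow> cong_l (f i) (g i)"
  have "sum f F \<in> LO" using h by (intro LO_sum) (auto simp: cong_l_def)
  moreover have "sum g F \<in> LO" using h by (intro LO_sum) (auto simp: cong_l_def)
  moreover have "sum (\<lambda>i. f i - g i) F \<in> LV" using h by (intro LV_sum) (auto simp: cong_l_def)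
  ultimately show ?thesis by (simp add: cong_l_def sum_subtractf)
qed

lemma const_diff: "const_l (b - c) = const_l b - (const_l c :: 'n::finite laurent)"
  by (simp add: const_l_def single_diff)

lemma const_zero: "const_l 0 = (0 :: 'n::finite laurent)"
  by (simp add: const_l_def)

lemma lam_pow_Ov: "lam ^ n \<in> Ov"
  by (induction n) (auto intro: Ov_mult Ov_lam Ov_1)

context rsq begin

lemma Ind:
  assumes fin: "finite G" and GQ: "G \<subseteq> Qset" and eq: "(\<Sum>q\<in>G. const_l (c q) * bw q) = 0"
  shows "\<forall>q\<in>G. c q = 0"
proof (rule ccontr)
  assume "\<not> (\<forall>q\<in>G. c q = 0)"
  define G' where "G' = {q \<in> G. c q \<noteq> 0}"
  have G'ne: "G' \<noteq> {}" and G'fin: "finite G'" and G'G: "G' \<subseteq> G"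
    using \<open>\<not> _\<close> fin by (auto simp: G'_def)
  have "\<forall>q\<in>G'. \<exists>t. c q * lam ^ fst t = lam ^ fst (snd t) * snd (snd t) \<and> snd (snd t) \<in> Ov \<and> snd (snd t) \<notin> Lv"
  proof
    fix q assume "q \<in> G'"
    then have "c q \<noteq> 0" by (simp add: G'_def)
    from Ov_decomp[OF this] obtain i j u where "c q * lam ^ j = lam ^ i * u" "u \<in> Ov" "u \<notin> Lv" by blast
    then show "\<exists>t. c q * lam ^ fst t = lam ^ fst (snd t) * snd (snd t) \<and> snd (snd t) \<in> Ov \<and> snd (snd t) \<notin> Lv"
      by (intro exI[of _ "(j, i, u)"]) simp
  qed
  then obtain T where T: "\<And>q. q \<in> G' \<Longrightarrow> c q * lam ^ fst (T q) = lam ^ fst (snd (T q)) * snd (snd (T q)) \<and> snd (snd (T q)) \<in> Ov \<and> snd (snd (T q)) \<notin> Lv"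
    using bchoice by metis
  define J where "J q = fst (T q)" for q
  define I where "I q = fst (snd (T q))" for q
  define U where "U q = snd (snd (T q))" for q
  define N where "N = Max (J ` G')"
  define e where "e q = I q + N - J q" for q
  have JN: "J q \<le> N" if "q \<in> G'" for q using that G'fin by (simp add: N_def)
  have ce: "c q * lam ^ N = lam ^ e q * U q" if q: "q \<in> G'" for q
  proof -
    have "c q * lam ^ N = (c q * lam ^ J q) * lam ^ (N - J q)"
      using JN[OF q] by (simp add: power_add[symmetric] mult.assoc)
    also have "\<dots> = lam ^ I q * U q * lam ^ (N - J q)" using T[OF q] by (simp add: J_def I_def U_def)
    also have "\<dots> = lam ^ e q * U q"
      using JN[OF q] by (simp add: e_def power_add[symmetric] ac_simps)
    finally show ?thesis .
  qed
  define t where "t = Min (e ` G')"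
  have "t \<in> e ` G'" unfolding t_def using G'fin G'ne by (intro Min_in) auto
  then obtain q0 where q0: "q0 \<in> G'" "e q0 = t" by blast
  have te: "t \<le> e q" if "q \<in> G'" for q using that G'fin by (simp add: t_def)
  define s where "s = lam ^ N / lam ^ t"
  define c' where "c' q = c q * s" for q
  have c'G': "c' q = lam ^ (e q - t) * U q" if q: "q \<in> G'" for q
  proof -
    have "c' q = lam ^ e q * U q / lam ^ t" using ce[OF q] by (simp add: c'_def s_def)
    also have "\<dots> = lam ^ (e q - t) * U q"
      using te[OF q] lam_nz by (simp add: power_diff)
    finally show ?thesis .
  qed
  have c'Ov: "c' q \<in> Ov" if "q \<in> G" for q
  proof (cases "q \<in> G'")
    case True then show ?thesis using c'G' T lam_pow_Ov Ov_mult by (simp add: U_def)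
  next
    case False then have "c q = 0" using that by (simp add: G'_def)
    then show ?thesis by (simp add: c'_def Ov_0)
  qed
  have c'q0: "c' q0 \<notin> Lv" using c'G'[OF q0(1)] q0 T[OF q0(1)] by (simp add: U_def)
  have "(\<Sum>q\<in>G. const_l (c' q) * bw q) = const_l s * (\<Sum>q\<in>G. const_l (c q) * bw q)"
    by (simp add: sum_distrib_left c'_def const_mult ac_simps)
  then have sum0: "(\<Sum>q\<in>G. const_l (c' q) * bw q) = 0" using eq by simp
  have "cong_l (\<Sum>q\<in>G. const_l (c' q) * bw q) (\<Sum>q\<in>G. const_l (c' q) * x\<^bsup>comp q\<^esup>)"
  proof (rule cong_sum)
    fix q assume q: "q \<in> G"
    show "cong_l (const_l (c' q) * bw q) (const_l (c' q) * x\<^bsup>comp q\<^esup>)"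
      by (rule cong_mult[OF cong_refl[OF const_LO[OF c'Ov[OF q]]] bw_cong]) (use q GQ in blast)
  qed
  then have "0 - (\<Sum>q\<in>G. Poly_Mapping.single (comp q) (c' q)) \<in> LV"
    using sum0 by (simp add: cong_l_def const_mon)
  then have "Poly_Mapping.lookup (0 - (\<Sum>q\<in>G. Poly_Mapping.single (comp q) (c' q))) (comp q0) \<in> Lv"
    unfolding LL_def by blast
  then have "- (\<Sum>q\<in>G. if comp q = comp q0 then c' q else 0) \<in> Lv"
    by (simp add: lookup_minus lookup_sum lookup_single when_def eq_commute)
  moreover have "(\<Sum>q\<in>G. if comp q = comp q0 then c' q else 0) = (\<Sum>q\<in>G. if q = q0 then c' q else 0)"
  proof (rule sum.cong[OF refl])
    fix q assume "q \<in> G"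
    then have "comp q = comp q0 \<longleftrightarrow> q = q0"
      using q0(1) G'G GQ comp_inj unfolding inj_on_def by blast
    then show "(if comp q = comp q0 then c' q else 0) = (if q = q0 then c' q else 0)" by simp
  qed
  moreover have "(\<Sum>q\<in>G. if q = q0 then c' q else 0) = c' q0"
  proof -
    have "q0 \<in> G" using q0(1) G'G by blast
    then show ?thesis using fin by simp
  qed
  ultimately have "- c' q0 \<in> Lv" by simp
  then have "c' q0 \<in> Lv" using Lv_uminus by fastforce
  then show False using c'q0 by simp
qed

lemma sum_restrict:
  assumes "finite G" "A \<subseteq> G"
  shows "(\<Sum>q\<in>G. const_l (if q \<in> A then c q else 0) * bw q) = (\<Sum>q\<in>A. const_l (c q) * bw q)"
proof -
  have "(\<Sum>q\<in>G. const_l (if q \<in> A then c q else 0) * bw q) = (\<Sum>q\<in>G. if q \<in> A then const_l (c q) * bw q else 0)"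
    by (rule sum.cong[OF refl]) (simp add: const_zero)
  also have "\<dots> = (\<Sum>q\<in>G \<inter> A. const_l (c q) * bw q)"
    using assms(1) by (simp add: sum.inter_restrict)
  also have "G \<inter> A = A" using assms(2) by blast
  finally show ?thesis .
qed

lemma Uniq:
  assumes "finite G1" "finite G2" "G1 \<subseteq> Qset" "G2 \<subseteq> Qset"
    and eq: "(\<Sum>q\<in>G1. const_l (c1 q) * bw q) = (\<Sum>q\<in>G2. const_l (c2 q) * bw q)"
    and q: "q \<in> G1" "q \<notin> G2"
  shows "c1 q = 0"
proof -
  define c where "c q = (if q \<in> G1 then c1 q else 0) - (if q \<in> G2 then c2 q else 0)" for q
  have fin: "finite (G1 \<union> G2)" using assms by simp
  have "(\<Sum>q\<in>G1 \<union> G2. const_l (c q) * bw q) =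
     (\<Sum>q\<in>G1 \<union> G2. const_l (if q \<in> G1 then c1 q else 0) * bw q) - (\<Sum>q\<in>G1 \<union> G2. const_l (if q \<in> G2 then c2 q else 0) * bw q)"
    by (simp add: c_def const_diff left_diff_distrib sum_subtractf)
  also have "\<dots> = 0"
    using eq sum_restrict[OF fin, of G1 c1] sum_restrict[OF fin, of G2 c2] by simp
  finally have "\<forall>q\<in>G1 \<union> G2. c q = 0"
    using Ind[OF fin] assms(3,4) by blast
  then have "c q = 0" using q by blast
  then show ?thesis using q by (simp add: c_def)
qed

lemma bw_inj: "inj_on bw Qset"
proof (rule inj_onI, rule ccontr)
  fix q q' assume q: "q \<in> Qset" "q' \<in> Qset" "bw q = bw q'" "q \<noteq> q'"
  have "(\<Sum>p\<in>{q}. const_l 1 * bw p) = (\<Sum>p\<in>{q'}. const_l 1 * bw p)"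
    using q(3) by simp
  then have "(1::ratfun) = 0" using Uniq[of "{q}" "{q'}" "\<lambda>_. 1" "\<lambda>_. 1" q] q by simp
  then show False by simp
qed

end



lemma vs_laurent: "vector_space (\<lambda>c (p::'n::finite laurent). const_l c * p)"
  unfolding vector_space_def
  by (simp add: const_add const_mult const_one distrib_left distrib_right mult.assoc)

lemma pm_expand_const: "(p :: 'n::finite laurent) = (\<Sum>w\<in>Poly_Mapping.keys p. const_l (Poly_Mapping.lookup p w) * x\<^bsup>w\<^esup>)"
  by (subst pm_expand) (simp add: const_mon)

context rsq begin

definition LS :: "((int ^ 'n) \<times> (nat \<Rightarrow> nat)) set \<Rightarrow> 'n laurent set" where
  "LS X = {\<Sum>q\<in>G. const_l (c q) * bw q | G c. finite G \<and> G \<subseteq> X}"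

lemma LSI: assumes "finite G" "G \<subseteq> X" "p = (\<Sum>q\<in>G. const_l (c q) * bw q)" shows "p \<in> LS X"
  unfolding LS_def by (rule CollectI, rule exI[of _ G], rule exI[of _ c]) (simp add: assms)

lemma LS_0: "0 \<in> LS X"
  unfolding LS_def by (rule CollectI, rule exI[of _ "{}"]) simp

lemma LS_bw: assumes "q \<in> X" shows "bw q \<in> LS X"
proof -
  have "bw q = (\<Sum>p\<in>{q}. const_l 1 * bw p)" by (simp add: const_one)
  then show ?thesis using assms by (intro LSI[of "{q}"]) auto
qed

lemma LS_add: assumes "p \<in> LS X" "p' \<in> LS X" shows "p + p' \<in> LS X"
proof -
  obtain G1 c1 where 1: "p = (\<Sum>q\<in>G1. const_l (c1 q) * bw q)" "finite G1" "G1 \<subseteq> X"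
    using assms(1) unfolding LS_def by blast
  obtain G2 c2 where 2: "p' = (\<Sum>q\<in>G2. const_l (c2 q) * bw q)" "finite G2" "G2 \<subseteq> X"
    using assms(2) unfolding LS_def by blast
  define c where "c q = (if q \<in> G1 then c1 q else 0) + (if q \<in> G2 then c2 q else 0)" for q
  have fin: "finite (G1 \<union> G2)" using 1 2 by simp
  have "(\<Sum>q\<in>G1 \<union> G2. const_l (c q) * bw q) =
     (\<Sum>q\<in>G1 \<union> G2. const_l (if q \<in> G1 then c1 q else 0) * bw q) + (\<Sum>q\<in>G1 \<union> G2. const_l (if q \<in> G2 then c2 q else 0) * bw q)"
    by (simp add: c_def const_add distrib_right sum.distrib)
  also have "\<dots> = p + p'"
    using 1 2 sum_restrict[OF fin, of G1 c1] sum_restrict[OF fin, of G2 c2] by simp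
  finally have "p + p' = (\<Sum>q\<in>G1 \<union> G2. const_l (c q) * bw q)" by simp
  moreover have "G1 \<union> G2 \<subseteq> X" using 1 2 by blast
  ultimately show ?thesis using fin by (intro LSI) auto
qed

lemma LS_scale: assumes "p \<in> LS X" shows "const_l d * p \<in> LS X"
proof -
  obtain G c where 1: "p = (\<Sum>q\<in>G. const_l (c q) * bw q)" "finite G" "G \<subseteq> X"
    using assms unfolding LS_def by blast
  have "const_l d * p = (\<Sum>q\<in>G. const_l (d * c q) * bw q)"
    using 1 by (simp add: sum_distrib_left const_mult mult.assoc)
  then show ?thesis using 1 by (intro LSI) auto
qed

lemma LS_sum: "(\<And>i. i \<in> F \<Longrightarrow> f i \<in> LS X) \<Longrightarrow> sum f F \<in> LS X"
  by (rule sum_closed[OF LS_0 LS_add])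

lemma LS_mono: "X \<subseteq> Y \<Longrightarrow> LS X \<subseteq> LS Y"
  unfolding LS_def by blast

lemma span_M: assumes u: "u \<in> MM" shows "x\<^bsup>u\<^esup> \<in> LS Qset"
proof -
  interpret V: vector_space "\<lambda>c (p::'n laurent). const_l c * p" by (rule vs_laurent)
  define d where "d = deg u"
  define Md where "Md = {v \<in> MM. deg v = d}"
  define Qd where "Qd = {q \<in> Qset. deg (comp q) = d}"
  define B where "B = bw ` Qd"
  have finQd: "finite Qd" and cardQd: "card Qd = card Md"
    using Qd_props[of d] by (simp_all add: Qd_def Md_def)
  have finMd: "finite Md" using finite_Md by (simp add: Md_def)
  have QdQ: "Qd \<subseteq> Qset" by (simp add: Qd_def)
  have injB: "inj_on bw Qd" using bw_inj QdQ by (rule inj_on_subset)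
  have finB: "finite B" using finQd by (simp add: B_def)
  have cardB: "card B = card Qd" using card_image[OF injB] by (simp add: B_def)
  have indB: "V.independent B"
  proof (rule V.independent_if_scalars_zero[OF finB])
    fix f z assume s: "(\<Sum>x\<in>B. const_l (f x) * x) = 0" and z: "z \<in> B"
    have "(\<Sum>q\<in>Qd. const_l (f (bw q)) * bw q) = 0"
      using s injB by (simp add: B_def sum.reindex)
    then have "\<forall>q\<in>Qd. f (bw q) = 0" by (rule Ind[OF finQd QdQ, of "\<lambda>q. f (bw q)"])
    then show "f z = 0" using z by (auto simp: B_def)
  qed
  have BM: "B \<subseteq> V.span (monomial_x ` Md)"
  proof
    fix z assume "z \<in> B"
    then obtain q where q: "q \<in> Qd" "z = bw q" by (auto simp: B_def)
    have keys: "Poly_Mapping.keys z \<subseteq> Md"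
      using bw_Hd[of q] q QdQ by (auto simp: Hd_def Md_def Qd_def)
    have "z = (\<Sum>w\<in>Poly_Mapping.keys z. const_l (Poly_Mapping.lookup z w) * x\<^bsup>w\<^esup>)"
      by (rule pm_expand_const)
    also have "\<dots> \<in> V.span (monomial_x ` Md)"
    proof (rule V.span_sum)
      fix w assume "w \<in> Poly_Mapping.keys z"
      then have "x\<^bsup>w\<^esup> \<in> monomial_x ` Md" using keys by blast
      then show "const_l (Poly_Mapping.lookup z w) * x\<^bsup>w\<^esup> \<in> V.span (monomial_x ` Md)"
        by (intro V.span_scale V.span_base)
    qed
    finally show "z \<in> V.span (monomial_x ` Md)" .
  qed
  have xu: "x\<^bsup>u\<^esup> \<in> monomial_x ` Md" using u by (simp add: Md_def d_def)
  have "x\<^bsup>u\<^esup> \<in> V.span B"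
  proof (rule ccontr)
    assume nsp: "x\<^bsup>u\<^esup> \<notin> V.span B"
    then have nB: "x\<^bsup>u\<^esup> \<notin> B" using V.span_base by blast
    have "V.independent (insert (x\<^bsup>u\<^esup>) B)"
      using V.independent_insert indB nsp nB by simp
    moreover have "insert (x\<^bsup>u\<^esup>) B \<subseteq> V.span (monomial_x ` Md)"
      using BM xu V.span_base by blast
    ultimately have "card (insert (x\<^bsup>u\<^esup>) B) \<le> card (monomial_x ` Md)"
      using V.independent_span_bound[of "monomial_x ` Md"] finMd by blast
    also have "\<dots> \<le> card Md" using finMd by (rule card_image_le)
    finally have "card B + 1 \<le> card B" using cardQd cardB finB nB by simp
    then show False by simp
  qed
  then obtain t r where tr: "x\<^bsup>u\<^esup> = (\<Sum>a\<in>t. const_l (r a) * a)" "finite t" "t \<subseteq> B"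
    unfolding V.span_explicit by blast
  define G where "G = {q \<in> Qd. bw q \<in> t}"
  have tG: "t = bw ` G" using tr(3) by (auto simp: G_def B_def)
  have injG: "inj_on bw G" using injB by (rule inj_on_subset) (auto simp: G_def)
  have "x\<^bsup>u\<^esup> = (\<Sum>q\<in>G. const_l (r (bw q)) * bw q)"
    using tr(1) tG injG by (simp add: sum.reindex)
  moreover have "finite G" using finQd by (simp add: G_def)
  moreover have "G \<subseteq> Qset" using QdQ by (auto simp: G_def)
  ultimately show ?thesis by (intro LSI) auto
qed

lemma S_LS: assumes "p \<in> Sprime a m" shows "p \<in> LS Qset"
proof -
  have "p = (\<Sum>w\<in>Poly_Mapping.keys p. const_l (Poly_Mapping.lookup p w) * x\<^bsup>w\<^esup>)"
    by (rule pm_expand_const)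
  also have "\<dots> \<in> LS Qset"
  proof (rule LS_sum)
    fix w assume "w \<in> Poly_Mapping.keys p"
    then have "w \<in> MM" using assms by (auto simp: Sprime_def)
    then show "const_l (Poly_Mapping.lookup p w) * x\<^bsup>w\<^esup> \<in> LS Qset"
      by (intro LS_scale span_M)
  qed
  finally show ?thesis .
qed

end



context rsq begin

abbreviation "SS \<equiv> Sprime a m"

lemma S_mult: assumes "p \<in> SS" "q \<in> SS" shows "p * q \<in> SS"
proof -
  have "Poly_Mapping.keys (p * q) \<subseteq> {u + v |u v. u \<in> Poly_Mapping.keys p \<and> v \<in> Poly_Mapping.keys q}"
    by (rule keys_mult)
  also have "\<dots> \<subseteq> MM"
  proof
    fix w assume "w \<in> {u + v |u v. u \<in> Poly_Mapping.keys p \<and> v \<in> Poly_Mapping.keys q}"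
    then obtain u v where "w = u + v" "u \<in> Poly_Mapping.keys p" "v \<in> Poly_Mapping.keys q" by blast
    then have "w = u + v" "u \<in> MM" "v \<in> MM" using assms unfolding Sprime_def by blast+
    then show "w \<in> MM" using M_add by simp
  qed
  finally show ?thesis unfolding Sprime_def by blast
qed

lemma S_add: "p \<in> SS \<Longrightarrow> q \<in> SS \<Longrightarrow> p + q \<in> SS"
  unfolding Sprime_def using keys_add[of p q] by blast

lemma S_zero: "0 \<in> SS"
  unfolding Sprime_def by simp

lemma S_const: "p \<in> SS \<Longrightarrow> const_l c * p \<in> SS"
  unfolding Sprime_def using keys_const_mult[of c p] by blast

lemma S_bw: assumes "q \<in> Qset" shows "bw q \<in> SS"
proof -
  have "bw q \<in> Hd (deg (comp q))" using assms by (rule bw_Hd)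
  then show ?thesis unfolding Hd_def Sprime_def by blast
qed

lemma S_Ff: assumes "j \<in> {1..m}" shows "Ff j \<in> SS"
proof -
  have "Ff j \<in> Hd 1" using assms by (rule Ff_Hd)
  then show ?thesis unfolding Hd_def Sprime_def by blast
qed

definition sh :: "nat \<Rightarrow> (int ^ 'n) \<times> (nat \<Rightarrow> nat) \<Rightarrow> (int ^ 'n) \<times> (nat \<Rightarrow> nat)" where
  "sh k q = (fst q, (snd q)(k := Suc (snd q k)))"

lemma sh_Q: "k \<in> {1..m} \<Longrightarrow> q \<in> Qset \<Longrightarrow> sh k q \<in> Qset"
  unfolding Qset_def sh_def by (cases q) auto

lemma sh_inj: "inj_on (sh k) X"
proof (rule inj_onI)
  fix q q' assume "sh k q = sh k q'"
  then have "fst q = fst q'" "(snd q)(k := Suc (snd q k)) = (snd q')(k := Suc (snd q' k))"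
    unfolding sh_def by simp_all
  have "snd q j = snd q' j" for j
  proof -
    have "((snd q)(k := Suc (snd q k))) j = ((snd q')(k := Suc (snd q' k))) j"
      using \<open>(snd q)(k := Suc (snd q k)) = _\<close> by simp
    then show ?thesis by (cases "j = k") auto
  qed
  then have "snd q = snd q'" by (rule ext)
  then show "q = q'" using \<open>fst q = fst q'\<close> by (simp add: prod_eq_iff)
qed

lemma bw_sh: assumes k: "k \<in> {1..m}" shows "bw (sh k q) = bw q * Ff k"
proof -
  define g where "g j = Ff j ^ snd q j" for j
  define g' where "g' j = Ff j ^ snd (sh k q) j" for j
  have "prod g' {1..m} = g' k * prod g' ({1..m} - {k})"
    using k by (simp add: prod.remove)
  also have "prod g' ({1..m} - {k}) = prod g ({1..m} - {k})"
    by (rule prod.cong) (auto simp: g_def g'_def sh_def)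
  also have "g' k = Ff k * g k" by (simp add: g_def g'_def sh_def)
  also have "Ff k * g k * prod g ({1..m} - {k}) = Ff k * prod g {1..m}"
    using k by (simp add: prod.remove mult.assoc)
  finally have "prod g' {1..m} = Ff k * prod g {1..m}" .
  then show ?thesis
    by (simp add: bw_def g_def g'_def ac_simps) (simp add: sh_def)
qed

definition Qb :: "nat \<Rightarrow> ((int ^ 'n) \<times> (nat \<Rightarrow> nat)) set" where
  "Qb i = {q \<in> Qset. \<exists>j\<in>{1..i}. 0 < snd q j}"

lemma Qb_Q: "Qb i \<subseteq> Qset" unfolding Qb_def by blast

lemma sh_Qb: "k \<in> {1..i} \<Longrightarrow> i \<le> m \<Longrightarrow> q \<in> Qset \<Longrightarrow> sh k q \<in> Qb i"
  unfolding Qb_def using sh_Q[of k q] by (auto simp: sh_def)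

lemma sh_notQb: "q \<in> Qset \<Longrightarrow> q \<notin> Qb i \<Longrightarrow> sh (Suc i) q \<notin> Qb i"
  unfolding Qb_def sh_def by auto

lemma Qb_sh: assumes "q \<in> Qb i" "i \<le> m" shows "\<exists>j\<in>{1..i}. \<exists>q'\<in>Qset. q = sh j q'"
proof -
  obtain r \<alpha> where q: "q = (r, \<alpha>)" by (cases q)
  obtain j where j: "j \<in> {1..i}" "0 < \<alpha> j" using assms q unfolding Qb_def by auto
  define q' where "q' = (r, \<alpha>(j := \<alpha> j - 1))"
  have "q' \<in> Qset" using assms(1) j q unfolding Qb_def Qset_def q'_def by auto
  moreover have "q = sh j q'" using j q by (simp add: q'_def sh_def)
  ultimately show ?thesis using j by blast
qed

lemma LS_sh_explicit:
  assumes "k \<in> {1..m}"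
  shows "(\<Sum>q\<in>G. const_l (c q) * bw q) * Ff k =
    (\<Sum>q'\<in>sh k ` G. const_l (c (inv_into G (sh k) q')) * bw q')"
proof -
  have "(\<Sum>q'\<in>sh k ` G. const_l (c (inv_into G (sh k) q')) * bw q') =
      (\<Sum>q\<in>G. const_l (c (inv_into G (sh k) (sh k q))) * bw (sh k q))"
    using sh_inj by (simp add: sum.reindex)
  also have "\<dots> = (\<Sum>q\<in>G. const_l (c q) * (bw q * Ff k))"
    by (rule sum.cong[OF refl]) (simp add: inv_into_f_f[OF sh_inj] bw_sh[OF assms])
  finally show ?thesis by (simp add: sum_distrib_right mult.assoc)
qed

definition Id :: "nat \<Rightarrow> 'n laurent set" where
  "Id i = {\<Sum>k<i. g k * Ff (Suc k) | g. \<forall>k. g k \<in> SS}"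

lemma IdI: "(\<And>k. g k \<in> SS) \<Longrightarrow> p = (\<Sum>k<i. g k * Ff (Suc k)) \<Longrightarrow> p \<in> Id i"
  unfolding Id_def by (rule CollectI, rule exI[of _ g]) simp

lemma IdE': assumes "p \<in> Id i" shows "\<exists>g. (\<forall>k. g k \<in> SS) \<and> p = (\<Sum>k<i. g k * Ff (Suc k))"
proof -
  have "\<exists>g. p = (\<Sum>k<i. g k * Ff (Suc k)) \<and> (\<forall>k. g k \<in> SS)"
    using assms unfolding Id_def by (simp only: mem_Collect_eq)
  then show ?thesis by blast
qed

lemma Id_0: "0 \<in> Id i"
  by (rule IdI[of "\<lambda>_. 0"]) (simp_all add: S_zero)

lemma Id_add: assumes "p \<in> Id i" "q \<in> Id i" shows "p + q \<in> Id i"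
proof -
  obtain g where g: "\<forall>k. g k \<in> SS" "p = (\<Sum>k<i. g k * Ff (Suc k))" using IdE'[OF assms(1)] by blast
  obtain h where h: "\<forall>k. h k \<in> SS" "q = (\<Sum>k<i. h k * Ff (Suc k))" using IdE'[OF assms(2)] by blast
  show ?thesis
    by (rule IdI[of "\<lambda>k. g k + h k"]) (simp_all add: g h S_add distrib_right sum.distrib)
qed

lemma Id_scale: assumes "p \<in> Id i" shows "const_l c * p \<in> Id i"
proof -
  obtain g where g: "\<forall>k. g k \<in> SS" "p = (\<Sum>k<i. g k * Ff (Suc k))" using IdE'[OF assms(1)] by blast
  show ?thesis
    by (rule IdI[of "\<lambda>k. const_l c * g k"]) (simp_all add: g S_const sum_distrib_left mult.assoc)
qed

lemma LS_Id: assumes "i \<le> m" shows "LS (Qb i) \<subseteq> Id i"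
proof
  fix p assume "p \<in> LS (Qb i)"
  then obtain G c where G: "p = (\<Sum>q\<in>G. const_l (c q) * bw q)" "finite G" "G \<subseteq> Qb i"
    unfolding LS_def by blast
  have bwI: "bw q \<in> Id i" if q: "q \<in> Qb i" for q
  proof -
    obtain j q' where j: "j \<in> {1..i}" "q' \<in> Qset" "q = sh j q'" using Qb_sh[OF q assms] by blast
    have jm: "j \<in> {1..m}" using j assms by auto
    have "bw q = bw q' * Ff j" using j bw_sh[OF jm] by simp
    also have "\<dots> = (\<Sum>k<i. (if k = j - 1 then bw q' else 0) * Ff (Suc k))"
    proof -
      have "(\<Sum>k<i. (if k = j - 1 then bw q' else 0) * Ff (Suc k)) = (\<Sum>k<i. if k = j - 1 then bw q' * Ff (Suc k) else 0)"
        by (rule sum.cong) auto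
      also have "\<dots> = bw q' * Ff (Suc (j - 1))"
      proof -
        have "j - 1 \<in> {..<i}" using j by auto
        then show ?thesis by simp
      qed
      also have "Suc (j - 1) = j" using j by simp
      finally show ?thesis by simp
    qed
    finally show ?thesis
      by (rule IdI[rotated]) (simp add: S_bw[OF j(2)] S_zero)
  qed
  show "p \<in> Id i" unfolding G(1)
  proof (rule sum_closed[OF Id_0 Id_add])
    fix q assume "q \<in> G"
    then have "q \<in> Qb i" using G(3) by blast
    then show "const_l (c q) * bw q \<in> Id i" by (rule Id_scale[OF bwI])
  qed
qed

lemma Id_LS: assumes "i \<le> m" shows "Id i \<subseteq> LS (Qb i)"
proof
  fix p assume p: "p \<in> Id i"
  obtain g where g: "\<forall>k. g k \<in> SS" "p = (\<Sum>k<i. g k * Ff (Suc k))" using IdE'[OF p] by blast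
  show "p \<in> LS (Qb i)" unfolding g(2)
  proof (rule LS_sum)
    fix k assume k: "k \<in> {..<i}"
    obtain G c where G: "g k = (\<Sum>q\<in>G. const_l (c q) * bw q)" "finite G" "G \<subseteq> Qset"
      using S_LS[OF spec[OF g(1), of k]] unfolding LS_def by blast
    have km: "Suc k \<in> {1..m}" using k assms by auto
    have "g k * Ff (Suc k) = (\<Sum>q'\<in>sh (Suc k) ` G. const_l (c (inv_into G (sh (Suc k)) q')) * bw q')"
      unfolding G(1) by (rule LS_sh_explicit[OF km])
    moreover have "sh (Suc k) ` G \<subseteq> Qb i" using G(3) k assms sh_Qb[of "Suc k" i] by auto
    ultimately show "g k * Ff (Suc k) \<in> LS (Qb i)" using G(2) by (intro LSI) auto
  qed
qed

lemma regular_step: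
  assumes i: "i < m" and g: "g \<in> SS" and gI: "g * Ff (Suc i) \<in> Id i"
  shows "g \<in> Id i"
proof -
  obtain G c where G: "g = (\<Sum>q\<in>G. const_l (c q) * bw q)" "finite G" "G \<subseteq> Qset"
    using S_LS[OF g] unfolding LS_def by blast
  have im: "Suc i \<in> {1..m}" using i by auto
  have e1: "g * Ff (Suc i) = (\<Sum>q'\<in>sh (Suc i) ` G. const_l (c (inv_into G (sh (Suc i)) q')) * bw q')"
    unfolding G(1) by (rule LS_sh_explicit[OF im])
  have "g * Ff (Suc i) \<in> LS (Qb i)" using Id_LS[of i] i gI by auto
  then obtain H d where H: "g * Ff (Suc i) = (\<Sum>q\<in>H. const_l (d q) * bw q)" "finite H" "H \<subseteq> Qb i"
    unfolding LS_def by blast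
  have shG: "sh (Suc i) ` G \<subseteq> Qset" using G(3) sh_Q[OF im] by auto
  have c0: "c q = 0" if q: "q \<in> G" "q \<notin> Qb i" for q
  proof -
    have "sh (Suc i) q \<notin> Qb i" using sh_notQb q G(3) by blast
    then have "sh (Suc i) q \<notin> H" using H(3) by blast
    then have "c (inv_into G (sh (Suc i)) (sh (Suc i) q)) = 0"
      using Uniq[of "sh (Suc i) ` G" H "\<lambda>q'. c (inv_into G (sh (Suc i)) q')" d "sh (Suc i) q"]
        e1 H G(2) shG Qb_Q q(1) by auto
    then show ?thesis using inv_into_f_f[OF sh_inj q(1)] by simp
  qed
  have "g = (\<Sum>q\<in>G \<inter> Qb i. const_l (c q) * bw q)"
    unfolding G(1) using G(2) c0 by (intro sum.mono_neutral_right) (auto simp: const_zero)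
  then have "g \<in> LS (Qb i)" using G(2) by (intro LSI) auto
  then show ?thesis using LS_Id[of i] i by auto
qed

lemma one_notin: "1 \<notin> Id m"
proof
  assume "1 \<in> Id m"
  then have "1 \<in> LS (Qb m)" using Id_LS by blast
  then obtain H d where H: "1 = (\<Sum>q\<in>H. const_l (d q) * bw q)" "finite H" "H \<subseteq> Qb m"
    unfolding LS_def by blast
  define q0 where "q0 = ((0::int ^ 'n), (\<lambda>_::nat. 0::nat))"
  have q0Q: "q0 \<in> Qset"
    unfolding q0_def Qset_def Pset_def using coord_zero by simp
  have q0H: "q0 \<notin> H" using H(3) unfolding Qb_def q0_def by auto
  have "bw q0 = 1" by (simp add: bw_def q0_def mon_zero)
  then have "(\<Sum>q\<in>{q0}. const_l 1 * bw q) = (\<Sum>q\<in>H. const_l (d q) * bw q)"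
    using H(1) by (simp add: const_one)
  then have "(1::ratfun) = 0"
    using Uniq[of "{q0}" H "\<lambda>_. 1" d q0] H(2,3) q0Q q0H Qb_Q by auto
  then show False by simp
qed

lemma ideal_eq:
  assumes "i \<le> m"
  shows "ideal_in SS (take i (map Ff [1..<m+1])) = Id i"
proof -
  have len: "length (take i (map Ff [1..<m+1])) = i" using assms by (simp del: upt_Suc)
  have nth: "take i (map Ff [1..<m+1]) ! k = Ff (Suc k)" if "k < i" for k
  proof -
    have "take i (map Ff [1..<m+1]) ! k = map Ff [1..<m+1] ! k" using that by (rule nth_take)
    also have "\<dots> = Ff ([1..<m+1] ! k)" using that assms by (intro nth_map) (simp del: upt_Suc)
    also have "[1..<m+1] ! k = 1 + k" using that assms by (intro nth_upt) simp
    finally show ?thesis by simp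
  qed
  have "\<And>g. (\<Sum>k<i. g k * take i (map Ff [1..<m+1]) ! k) = (\<Sum>k<i. g k * Ff (Suc k))"
  proof (rule sum.cong[OF refl])
    fix g k assume "k \<in> {..<i}"
    then show "g k * take i (map Ff [1..<m+1]) ! k = g k * Ff (Suc k)" using nth by simp
  qed
  then show ?thesis unfolding ideal_in_def Id_def len by simp
qed

lemma final: "regular_seq_on SS (map Ff [1..<m+1])"
  unfolding regular_seq_on_def
proof (intro conjI allI impI ballI)
  show "set (map Ff [1..<m+1]) \<subseteq> SS" using S_Ff by auto
next
  fix i g assume i: "i < length (map Ff [1..<m+1])" and g: "g \<in> SS"
    and h: "g * map Ff [1..<m+1] ! i \<in> ideal_in SS (take i (map Ff [1..<m+1]))"
  have im: "i < m" using i by (simp del: upt_Suc)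
  have "g * Ff (Suc i) \<in> Id i" using h im ideal_eq[of i] by (simp del: upt_Suc)
  then have "g \<in> Id i" by (rule regular_step[OF im g])
  then show "g \<in> ideal_in SS (take i (map Ff [1..<m+1]))" using ideal_eq[of i] im by (simp del: upt_Suc)
next
  have "ideal_in SS (map Ff [1..<m+1]) = Id m" using ideal_eq[of m] by (simp del: upt_Suc)
  then show "1 \<notin> ideal_in SS (map Ff [1..<m+1])" using one_notin by simp
qed

end

theorem proposition5p19:
  fixes a :: "nat \<Rightarrow> int ^ 'n" and l :: "nat \<Rightarrow> nat" and m :: nat
  assumes indep: "independent (rvec ` a ` {1..m})"
    and inj: "inj_on (\<lambda>j. rvec (a j)) {1..m}"
    and pos: "\<forall>j\<in>{0..m}. 0 < l j"
    and gcd: "Gcd (l ` {0..m}) = 1"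
    and rel: "of_nat (l 0) *s a 0 = (\<Sum>j=1..m. of_nat (l j) *s a j)"
    and sum: "l 0 = (\<Sum>j=1..m. l j)"
  shows "regular_seq_on (Sprime a m)
           (map (\<lambda>j. x\<^bsup>a j\<^esup> - const_l lam * x\<^bsup>a 0\<^esup>) [1..<m+1])"
proof -
  interpret R: rsq a l m
    using indep inj pos rel sum by unfold_locales
  have "(\<lambda>j. x\<^bsup>a j\<^esup> - const_l lam * x\<^bsup>a 0\<^esup>) = R.Ff"
    by (rule ext) (simp add: R.Ff_def)
  then show ?thesis using R.final by (simp only:)
qed



end
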